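(* Let $G=(V,E)$ be a connected almost bipartite permutation graph that contains a hole, let $C$ be a shortest hole of $G$, $m=|C|$, and let $c_0,\dots,c_{m-1}$ be the vertices of $C$ in cyclic order (indices modulo $m$). For each $i$ let $A_i=\{v\in V: N(v)\cap C=\{c_{i-1},c_{i+1}\}\}$ and $B_i=\{v\in V: N(v)\cap C=\{c_i\}\}$ (indices of $A,B$ modulo $m$). Then for every $i\in\{0,\dots,m-1\}$: (1) $A_i$ and $B_i$ are independent sets; (2) for every $u\in A_i$ and every $w\in B_i$ we have $uw\in E$; (3) for every $u\in A_i$ we have $B_i\subseteq N(u)\subseteq B_{i-2}\cup A_{i-1}\cup B_i\cup A_{i+1}\cup B_{i+2}$; (4) for every $w\in B_i$ we have $A_i\subseteq N(w)\subseteq A_{i-2}\cup B_{i-1}\cup A_i\cup B_{i+1}\cup A_{i+2}$.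
   Context: All graphs are finite, simple, undirected; $N(v)$ is the open neighborhood of $v$. A hole is an induced cycle on at least five vertices. $K_3$ is the triangle, $C_k$ the cycle on $k$ vertices. $T_2$ is the tree on 7 vertices obtained from the claw $K_{1,3}$ by subdividing each edge once. $X_2$ is the 7-vertex graph obtained from a 4-cycle by attaching one new pendant vertex to each of three of its four vertices. $X_3$ is the 7-vertex graph obtained from the domino (two 4-cycles sharing exactly one edge) by attaching one new pendant vertex to one endpoint of the shared edge. A graph is an almost bipartite permutation graph if it contains none of $T_2, X_2, X_3, K_3, C_5,\dots,C_9$ as an induced subgraph. *)

theory Defs
  imports Main
begin

definition simple_graph :: "'a set \<Rightarrow> ('a \<Rightarrow> 'a \<Rightarrow> bool) \<Rightarrow> bool" where
  "simple_graph V E \<longleftrightarrow> finite V \<and> (\<forall>x y. E x y \<longrightarrow> x \<in> V \<and> y \<in> V)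
     \<and> (\<forall>x y. E x y \<longrightarrow> E y x) \<and> (\<forall>x. \<not> E x x)"

definition connected_graph :: "'a set \<Rightarrow> ('a \<Rightarrow> 'a \<Rightarrow> bool) \<Rightarrow> bool" where
  "connected_graph V E \<longleftrightarrow> (\<forall>x\<in>V. \<forall>y\<in>V. E\<^sup>*\<^sup>* x y)"

definition nbhd :: "'a set \<Rightarrow> ('a \<Rightarrow> 'a \<Rightarrow> bool) \<Rightarrow> 'a \<Rightarrow> 'a set" where
  "nbhd V E v = {u\<in>V. E v u}"

definition independent_set :: "('a \<Rightarrow> 'a \<Rightarrow> bool) \<Rightarrow> 'a set \<Rightarrow> bool" where
  "independent_set E S \<longleftrightarrow> (\<forall>x\<in>S. \<forall>y\<in>S. \<not> E x y)"

definition has_induced :: "'a set \<Rightarrow> ('a \<Rightarrow> 'a \<Rightarrow> bool) \<Rightarrow> nat \<Rightarrow> (nat \<Rightarrow> nat \<Rightarrow> bool) \<Rightarrow> bool" where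
  "has_induced V E k H \<longleftrightarrow> (\<exists>f. inj_on f {0..<k} \<and> f ` {0..<k} \<subseteq> V
      \<and> (\<forall>i<k. \<forall>j<k. E (f i) (f j) \<longleftrightarrow> H i j))"

definition edges_of :: "(nat \<times> nat) list \<Rightarrow> nat \<Rightarrow> nat \<Rightarrow> bool" where
  "edges_of L i j \<longleftrightarrow> (i, j) \<in> set L \<or> (j, i) \<in> set L"

definition cycle_pat :: "nat \<Rightarrow> nat \<Rightarrow> nat \<Rightarrow> bool" where
  "cycle_pat k i j \<longleftrightarrow> j = (i + 1) mod k \<or> i = (j + 1) mod k"

definition K3_pat :: "nat \<Rightarrow> nat \<Rightarrow> bool" where
  "K3_pat = edges_of [(0,1),(1,2),(0,2)]"

text \<open>T2: claw with centre 0, subdivided: 0-1-4, 0-2-5, 0-3-6.\<close>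
definition T2_pat :: "nat \<Rightarrow> nat \<Rightarrow> bool" where
  "T2_pat = edges_of [(0,1),(0,2),(0,3),(1,4),(2,5),(3,6)]"

text \<open>X2: 4-cycle 0-1-2-3-0 with pendants 4 at 0, 5 at 1, 6 at 2.\<close>
definition X2_pat :: "nat \<Rightarrow> nat \<Rightarrow> bool" where
  "X2_pat = edges_of [(0,1),(1,2),(2,3),(3,0),(0,4),(1,5),(2,6)]"

text \<open>X3: domino with 4-cycles 0-1-4-3-0 and 1-2-5-4-1 sharing edge 1-4,
  plus pendant 6 at 1.\<close>
definition X3_pat :: "nat \<Rightarrow> nat \<Rightarrow> bool" where
  "X3_pat = edges_of [(0,1),(1,2),(3,4),(4,5),(0,3),(1,4),(2,5),(1,6)]"

definition almost_bip_perm :: "'a set \<Rightarrow> ('a \<Rightarrow> 'a \<Rightarrow> bool) \<Rightarrow> bool" where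
  "almost_bip_perm V E \<longleftrightarrow>
     \<not> has_induced V E 7 T2_pat \<and> \<not> has_induced V E 7 X2_pat \<and>
     \<not> has_induced V E 7 X3_pat \<and> \<not> has_induced V E 3 K3_pat \<and>
     (\<forall>k\<in>{5..9}. \<not> has_induced V E k (cycle_pat k))"

definition is_hole_seq :: "'a set \<Rightarrow> ('a \<Rightarrow> 'a \<Rightarrow> bool) \<Rightarrow> nat \<Rightarrow> (nat \<Rightarrow> 'a) \<Rightarrow> bool" where
  "is_hole_seq V E m c \<longleftrightarrow> m \<ge> 5 \<and> inj_on c {0..<m} \<and> c ` {0..<m} \<subseteq> V
     \<and> (\<forall>i<m. \<forall>j<m. E (c i) (c j) \<longleftrightarrow> cycle_pat m i j)"

definition has_hole :: "'a set \<Rightarrow> ('a \<Rightarrow> 'a \<Rightarrow> bool) \<Rightarrow> bool" where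
  "has_hole V E \<longleftrightarrow> (\<exists>m c. is_hole_seq V E m c)"

definition shortest_hole_seq :: "'a set \<Rightarrow> ('a \<Rightarrow> 'a \<Rightarrow> bool) \<Rightarrow> nat \<Rightarrow> (nat \<Rightarrow> 'a) \<Rightarrow> bool" where
  "shortest_hole_seq V E m c \<longleftrightarrow> is_hole_seq V E m c
     \<and> (\<forall>k d. is_hole_seq V E k d \<longrightarrow> m \<le> k)"

definition cyc :: "nat \<Rightarrow> (nat \<Rightarrow> 'a) \<Rightarrow> int \<Rightarrow> 'a" where
  "cyc m c j = c (nat (j mod int m))"

definition A_set :: "'a set \<Rightarrow> ('a \<Rightarrow> 'a \<Rightarrow> bool) \<Rightarrow> nat \<Rightarrow> (nat \<Rightarrow> 'a) \<Rightarrow> int \<Rightarrow> 'a set" where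
  "A_set V E m c i = {v\<in>V. nbhd V E v \<inter> c ` {0..<m} = {cyc m c (i - 1), cyc m c (i + 1)}}"

definition B_set :: "'a set \<Rightarrow> ('a \<Rightarrow> 'a \<Rightarrow> bool) \<Rightarrow> nat \<Rightarrow> (nat \<Rightarrow> 'a) \<Rightarrow> int \<Rightarrow> 'a set" where
  "B_set V E m c i = {v\<in>V. nbhd V E v \<inter> c ` {0..<m} = {cyc m c i}}"

end

theory Submission
  imports Defs
begin


lemma all7: "(\<forall>i<(7::nat). P i) \<longleftrightarrow> P 0 \<and> P 1 \<and> P 2 \<and> P 3 \<and> P 4 \<and> P 5 \<and> P 6"
  by (simp add: numeral_eq_Suc All_less_Suc2)
lemma all5: "(\<forall>i<(5::nat). P i) \<longleftrightarrow> P 0 \<and> P 1 \<and> P 2 \<and> P 3 \<and> P 4"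
  by (simp add: numeral_eq_Suc All_less_Suc2)
lemma ex7: "(\<exists>i<(7::nat). P i) \<longleftrightarrow> P 0 \<or> P 1 \<or> P 2 \<or> P 3 \<or> P 4 \<or> P 5 \<or> P 6"
  by (simp add: numeral_eq_Suc Ex_less_Suc2)
lemma ex5: "(\<exists>i<(5::nat). P i) \<longleftrightarrow> P 0 \<or> P 1 \<or> P 2 \<or> P 3 \<or> P 4"
  by (simp add: numeral_eq_Suc Ex_less_Suc2)
lemma ex3: "(\<exists>i<(3::nat). P i) \<longleftrightarrow> P 0 \<or> P 1 \<or> P 2"
  by (simp add: numeral_eq_Suc Ex_less_Suc2)
lemma all3: "(\<forall>i<(3::nat). P i) \<longleftrightarrow> P 0 \<and> P 1 \<and> P 2"
  by (simp add: numeral_eq_Suc All_less_Suc2)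

lemma induced_list:
  assumes sg: "simple_graph V E" and sub: "set xs \<subseteq> V" and len: "length xs = k"
    and adj: "\<forall>i<k. \<forall>j<k. i < j \<longrightarrow> (E (xs!i) (xs!j) \<longleftrightarrow> H i j)"
    and Hs: "\<forall>i<k. \<forall>j<k. H i j = H j i" and Hi: "\<forall>i<k. \<not> H i i"
    and tw: "\<forall>i<k. \<forall>j<k. i < j \<longrightarrow> H i j \<or> (\<exists>l<k. H i l \<noteq> H j l)"
  shows "has_induced V E k H"
proof -
  have Es: "\<And>x y. E x y \<Longrightarrow> E y x" and Ei: "\<And>x. \<not> E x x"
    using sg unfolding simple_graph_def by blast+
  have adj2: "\<forall>i<k. \<forall>j<k. (E (xs!i) (xs!j) \<longleftrightarrow> H i j)"
  proof (intro allI impI)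
    fix i j assume i: "i<k" and j: "j<k"
    show "(E (xs!i) (xs!j) \<longleftrightarrow> H i j)"
    proof (cases i j rule: linorder_cases)
      case less then show ?thesis using adj i j by blast
    next
      case equal then show ?thesis using Ei Hi i by auto
    next
      case greater then show ?thesis using adj i j Hs Es by metis
    qed
  qed
  have inj: "inj_on (\<lambda>i. xs!i) {0..<k}"
  proof (rule inj_onI)
    fix i j assume i: "i \<in> {0..<k}" and j: "j \<in> {0..<k}" and eq: "xs!i = xs!j"
    show "i = j"
    proof (rule ccontr)
      assume ne: "i \<noteq> j"
      have ik: "i<k" and jk: "j<k" using i j by auto
      have all: "\<forall>l<k. H i l = H j l"
      proof (intro allI impI)
        fix l assume "l<k"
        then show "H i l = H j l" using adj2 ik jk eq by metis
      qed
      have hij: "\<not> H i j" using adj2 ik jk eq Ei by metis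
      show False
      proof (cases "i < j")
        case True then show ?thesis using tw ik jk all hij by blast
      next
        case False then have "j < i" using ne by auto
        then show ?thesis using tw ik jk all hij Hs by metis
      qed
    qed
  qed
  have img: "(\<lambda>i. xs!i) ` {0..<k} \<subseteq> V"
  proof
    fix y assume "y \<in> (\<lambda>i. xs!i) ` {0..<k}"
    then obtain i where "i < k" "y = xs!i" by auto
    then have "y \<in> set xs" using len by simp
    then show "y \<in> V" using sub by blast
  qed
  show ?thesis unfolding has_induced_def
    using inj img adj2 by blast
qed

lemma K3_ok: "\<forall>i<3. \<forall>j<3. K3_pat i j = K3_pat j i" "\<forall>i<3. \<not> K3_pat i i"
  "\<forall>i<3. \<forall>j<3. i < j \<longrightarrow> K3_pat i j \<or> (\<exists>l<3. K3_pat i l \<noteq> K3_pat j l)"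
  by (simp_all add: all3 ex3 K3_pat_def edges_of_def)

lemma T2_ok: "\<forall>i<7. \<forall>j<7. T2_pat i j = T2_pat j i" "\<forall>i<7. \<not> T2_pat i i"
  "\<forall>i<7. \<forall>j<7. i < j \<longrightarrow> T2_pat i j \<or> (\<exists>l<7. T2_pat i l \<noteq> T2_pat j l)"
  by (simp_all add: all7 ex7 T2_pat_def edges_of_def)

lemma X2_ok: "\<forall>i<7. \<forall>j<7. X2_pat i j = X2_pat j i" "\<forall>i<7. \<not> X2_pat i i"
  "\<forall>i<7. \<forall>j<7. i < j \<longrightarrow> X2_pat i j \<or> (\<exists>l<7. X2_pat i l \<noteq> X2_pat j l)"
  by (simp_all add: all7 ex7 X2_pat_def edges_of_def)

lemma C5_ok: "\<forall>i<5. \<forall>j<5. cycle_pat 5 i j = cycle_pat 5 j i" "\<forall>i<5. \<not> cycle_pat 5 i i"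
  "\<forall>i<5. \<forall>j<5. i < j \<longrightarrow> cycle_pat 5 i j \<or> (\<exists>l<5. cycle_pat 5 i l \<noteq> cycle_pat 5 j l)"
  by (simp_all add: all5 ex5 cycle_pat_def)


locale hctx =
  fixes V :: "'a set" and E :: "'a \<Rightarrow> 'a \<Rightarrow> bool" and m :: nat and c :: "nat \<Rightarrow> 'a"
  assumes sg: "simple_graph V E" and abp: "almost_bip_perm V E" and sh: "shortest_hole_seq V E m c"
begin

abbreviation "CC \<equiv> c ` {0..<m}"
abbreviation cy :: "int \<Rightarrow> 'a" where "cy p \<equiv> cyc m c p"

lemma Esym: "E x y \<Longrightarrow> E y x" using sg unfolding simple_graph_def by blast
lemma Eirr: "\<not> E x x" using sg unfolding simple_graph_def by blast
lemma EV: "E x y \<Longrightarrow> x \<in> V" "E x y \<Longrightarrow> y \<in> V" using sg unfolding simple_graph_def by blast+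
lemma hole: "is_hole_seq V E m c" using sh unfolding shortest_hole_seq_def by blast
lemma shortest: "is_hole_seq V E k d \<Longrightarrow> m \<le> k" using sh unfolding shortest_hole_seq_def by blast

lemma m10: "m \<ge> 10"
proof -
  have m5: "m \<ge> 5" using hole unfolding is_hole_seq_def by blast
  have "has_induced V E m (cycle_pat m)" using hole unfolding is_hole_seq_def has_induced_def by blast
  moreover have "\<forall>k\<in>{5..9}. \<not> has_induced V E k (cycle_pat k)" using abp unfolding almost_bip_perm_def by blast
  ultimately have "m \<notin> {5..9}" by blast
  then show ?thesis using m5 by auto
qed

lemma mpos: "int m > 0" using m10 by simp

lemma cy_def': "cy p = c (nat (p mod int m))" unfolding cyc_def by simp

lemma cy_idx: "nat (p mod int m) < m" using mpos
  by (metis Euclidean_Rings.pos_mod_bound Euclidean_Rings.pos_mod_sign nat_less_iff)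

lemma cy_C: "cy p \<in> CC" unfolding cy_def' using cy_idx by auto
lemma cy_V: "cy p \<in> V" using cy_C hole unfolding is_hole_seq_def by blast
lemma c_cy: "k < m \<Longrightarrow> c k = cy (int k)" unfolding cy_def' by simp
lemma C_cy: "y \<in> CC \<Longrightarrow> \<exists>p. y = cy p" using c_cy by auto

lemma cyc_eq: "cy p = cy q \<longleftrightarrow> p mod int m = q mod int m"
proof -
  have inj: "inj_on c {0..<m}" using hole unfolding is_hole_seq_def by blast
  have "cy p = cy q \<longleftrightarrow> nat (p mod int m) = nat (q mod int m)"
    unfolding cy_def' using inj cy_idx[of p] cy_idx[of q] by (auto dest: inj_onD)
  also have "\<dots> \<longleftrightarrow> p mod int m = q mod int m" using mpos by (simp add: nat_eq_iff)
  finally show ?thesis .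
qed

lemma cyc_eq_dvd: "cy p = cy q \<longleftrightarrow> int m dvd (p - q)"
  unfolding cyc_eq by (simp add: mod_eq_dvd_iff)

lemma cyc_adj: "E (cy p) (cy q) \<longleftrightarrow> cy q = cy (p + 1) \<or> cy p = cy (q + 1)"
proof -
  have adj: "\<forall>i<m. \<forall>j<m. E (c i) (c j) \<longleftrightarrow> cycle_pat m i j" using hole unfolding is_hole_seq_def by blast
  define P where "P = nat (p mod int m)"
  define Q where "Q = nat (q mod int m)"
  have P: "P < m" "Q < m" unfolding P_def Q_def using cy_idx by auto
  have nP: "nat ((p+1) mod int m) = (P + 1) mod m"
  proof -
    have "int ((P + 1) mod m) = (int P + 1) mod int m" by (simp add: zmod_int add.commute)
    also have "\<dots> = (p mod int m + 1) mod int m" unfolding P_def using mpos by simp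
    also have "\<dots> = (p + 1) mod int m" by (simp add: mod_add_left_eq)
    finally show ?thesis by simp
  qed
  have nQ: "nat ((q+1) mod int m) = (Q + 1) mod m"
  proof -
    have "int ((Q + 1) mod m) = (int Q + 1) mod int m" by (simp add: zmod_int add.commute)
    also have "\<dots> = (q mod int m + 1) mod int m" unfolding Q_def using mpos by simp
    also have "\<dots> = (q + 1) mod int m" by (simp add: mod_add_left_eq)
    finally show ?thesis by simp
  qed
  have inj: "inj_on c {0..<m}" using hole unfolding is_hole_seq_def by blast
  have m0: "0 < m" using m10 by simp
  have "E (cy p) (cy q) \<longleftrightarrow> cycle_pat m P Q" unfolding cy_def' P_def[symmetric] Q_def[symmetric] using adj P by blast
  also have "\<dots> \<longleftrightarrow> Q = (P+1) mod m \<or> P = (Q+1) mod m" unfolding cycle_pat_def by simp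
  also have "\<dots> \<longleftrightarrow> c Q = c ((P+1) mod m) \<or> c P = c ((Q+1) mod m)"
    using inj P m0 by (auto dest: inj_onD)
  also have "\<dots> \<longleftrightarrow> cy q = cy (p + 1) \<or> cy p = cy (q + 1)"
    unfolding cy_def' nP nQ P_def Q_def by simp
  finally show ?thesis .
qed

lemma cyc_eq_small: "\<bar>p - q\<bar> < int m \<Longrightarrow> cy p = cy q \<longleftrightarrow> p = q"
  unfolding cyc_eq_dvd
  by (metis dvd_0_right dvd_imp_le_int eq_iff_diff_eq_0 abs_of_nat linorder_not_le)

lemma cyc_adj_small: "\<bar>p - q\<bar> < int m - 1 \<Longrightarrow> E (cy p) (cy q) \<longleftrightarrow> \<bar>p - q\<bar> = 1"
  unfolding cyc_adj by (subst cyc_eq_small, simp, subst cyc_eq_small, simp, auto)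


definition At :: "'a \<Rightarrow> int \<Rightarrow> bool" where
  "At x a \<longleftrightarrow> (\<forall>b. E x (cy b) \<longleftrightarrow> cy b = cy (a - 1) \<or> cy b = cy (a + 1))"
definition Bt :: "'a \<Rightarrow> int \<Rightarrow> bool" where
  "Bt x a \<longleftrightarrow> (\<forall>b. E x (cy b) \<longleftrightarrow> cy b = cy a)"

lemma A_iff: "x \<in> A_set V E m c a \<longleftrightarrow> x \<in> V \<and> At x a"
proof
  assume x: "x \<in> A_set V E m c a"
  then have xV: "x \<in> V" and eq: "{u\<in>V. E x u} \<inter> CC = {cy (a - 1), cy (a + 1)}"
    unfolding A_set_def nbhd_def by auto
  have "E x (cy b) \<longleftrightarrow> cy b = cy (a - 1) \<or> cy b = cy (a + 1)" for b
  proof -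
    have "E x (cy b) \<longleftrightarrow> cy b \<in> {u\<in>V. E x u} \<inter> CC" using cy_V cy_C by auto
    then show ?thesis unfolding eq by auto
  qed
  then show "x \<in> V \<and> At x a" unfolding At_def using xV by blast
next
  assume "x \<in> V \<and> At x a"
  then have xV: "x \<in> V" and at: "\<And>b. E x (cy b) \<longleftrightarrow> cy b = cy (a - 1) \<or> cy b = cy (a + 1)"
    unfolding At_def by auto
  have "{u\<in>V. E x u} \<inter> CC = {cy (a - 1), cy (a + 1)}"
  proof
    show "{u\<in>V. E x u} \<inter> CC \<subseteq> {cy (a - 1), cy (a + 1)}"
    proof
      fix y assume y: "y \<in> {u\<in>V. E x u} \<inter> CC"
      then obtain p where "y = cy p" using C_cy by blast
      then show "y \<in> {cy (a - 1), cy (a + 1)}" using y at by auto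
    qed
    show "{cy (a - 1), cy (a + 1)} \<subseteq> {u\<in>V. E x u} \<inter> CC" using at cy_V cy_C by auto
  qed
  then show "x \<in> A_set V E m c a" unfolding A_set_def nbhd_def using xV by auto
qed

lemma B_iff: "x \<in> B_set V E m c a \<longleftrightarrow> x \<in> V \<and> Bt x a"
proof
  assume x: "x \<in> B_set V E m c a"
  then have xV: "x \<in> V" and eq: "{u\<in>V. E x u} \<inter> CC = {cy a}"
    unfolding B_set_def nbhd_def by auto
  have "E x (cy b) \<longleftrightarrow> cy b = cy a" for b
  proof -
    have "E x (cy b) \<longleftrightarrow> cy b \<in> {u\<in>V. E x u} \<inter> CC" using cy_V cy_C by auto
    then show ?thesis unfolding eq by auto
  qed
  then show "x \<in> V \<and> Bt x a" unfolding Bt_def using xV by blast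
next
  assume "x \<in> V \<and> Bt x a"
  then have xV: "x \<in> V" and at: "\<And>b. E x (cy b) \<longleftrightarrow> cy b = cy a"
    unfolding Bt_def by auto
  have "{u\<in>V. E x u} \<inter> CC = {cy a}"
  proof
    show "{u\<in>V. E x u} \<inter> CC \<subseteq> {cy a}"
    proof
      fix y assume y: "y \<in> {u\<in>V. E x u} \<inter> CC"
      then obtain p where "y = cy p" using C_cy by blast
      then show "y \<in> {cy a}" using y at by auto
    qed
    show "{cy a} \<subseteq> {u\<in>V. E x u} \<inter> CC" using at cy_V cy_C by auto
  qed
  then show "x \<in> B_set V E m c a" unfolding B_set_def nbhd_def using xV by auto
qed

lemma no_K3: "set xs \<subseteq> V \<Longrightarrow> length xs = 3 \<Longrightarrow> \<forall>i<3. \<forall>j<3. i < j \<longrightarrow> (E (xs!i) (xs!j) \<longleftrightarrow> K3_pat i j) \<Longrightarrow> False"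
  using induced_list[OF sg, of xs 3 K3_pat] K3_ok abp unfolding almost_bip_perm_def by blast
lemma no_T2: "set xs \<subseteq> V \<Longrightarrow> length xs = 7 \<Longrightarrow> \<forall>i<7. \<forall>j<7. i < j \<longrightarrow> (E (xs!i) (xs!j) \<longleftrightarrow> T2_pat i j) \<Longrightarrow> False"
  using induced_list[OF sg, of xs 7 T2_pat] T2_ok abp unfolding almost_bip_perm_def by blast
lemma no_X2: "set xs \<subseteq> V \<Longrightarrow> length xs = 7 \<Longrightarrow> \<forall>i<7. \<forall>j<7. i < j \<longrightarrow> (E (xs!i) (xs!j) \<longleftrightarrow> X2_pat i j) \<Longrightarrow> False"
  using induced_list[OF sg, of xs 7 X2_pat] X2_ok abp unfolding almost_bip_perm_def by blast
lemma no_C5: "set xs \<subseteq> V \<Longrightarrow> length xs = 5 \<Longrightarrow> \<forall>i<5. \<forall>j<5. i < j \<longrightarrow> (E (xs!i) (xs!j) \<longleftrightarrow> cycle_pat 5 i j) \<Longrightarrow> False"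
proof -
  assume a: "set xs \<subseteq> V" "length xs = 5" "\<forall>i<5. \<forall>j<5. i < j \<longrightarrow> (E (xs!i) (xs!j) \<longleftrightarrow> cycle_pat 5 i j)"
  have "has_induced V E 5 (cycle_pat 5)" using induced_list[OF sg a] C5_ok by blast
  moreover have "\<forall>k\<in>{5..9}. \<not> has_induced V E k (cycle_pat k)" using abp unfolding almost_bip_perm_def by blast
  ultimately show False by auto
qed

lemma tri: "E x y \<Longrightarrow> E y z \<Longrightarrow> E x z \<Longrightarrow> False"
  apply (rule no_K3[of "[x,y,z]"])
  using EV by (auto simp: all3 K3_pat_def edges_of_def)

lemma At_cy: "At (cy a) a"
  unfolding At_def cyc_adj by (auto simp: cyc_eq_dvd algebra_simps)


lemma gap:
  assumes xV: "x \<in> V" and xC: "x \<notin> CC" and e0: "E x (cy a)" and ej: "E x (cy (a + int j))"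
    and j3: "3 \<le> j" and jm: "j + 2 \<le> m" and none: "\<forall>k. 0 < k \<longrightarrow> k < j \<longrightarrow> \<not> E x (cy (a + int k))"
  shows "m \<le> j + 2"
proof -
  define d where "d = (\<lambda>k. if k \<le> j then cy (a + int k) else x)"
  have xne: "\<And>p. cy p \<noteq> x" using xC cy_C by metis
  have adjxx: "E x (cy (a + int k)) \<longleftrightarrow> k = 0 \<or> k = j" if "k \<le> j" for k
    using none e0 ej that by (cases "k = 0"; cases "k = j") auto
  have inj: "inj_on d {0..<j+2}"
  proof (rule inj_onI)
    fix k l assume k: "k \<in> {0..<j+2}" and l: "l \<in> {0..<j+2}" and eq: "d k = d l"
    show "k = l"
    proof (cases "k \<le> j"; cases "l \<le> j")
      assume "k \<le> j" "l \<le> j"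
      then have "cy (a + int k) = cy (a + int l)" using eq unfolding d_def by simp
      moreover have "\<bar>(a + int k) - (a + int l)\<bar> < int m" using \<open>k \<le> j\<close> \<open>l \<le> j\<close> jm by auto
      ultimately show "k = l" using cyc_eq_small by auto
    next
      assume "k \<le> j" "\<not> l \<le> j" then show "k = l" using eq xne unfolding d_def by auto
    next
      assume "\<not> k \<le> j" "l \<le> j" then show "k = l" using eq xne unfolding d_def by (auto simp: eq_commute)
    next
      assume "\<not> k \<le> j" "\<not> l \<le> j" then show "k = l" using k l by auto
    qed
  qed
  have img: "d ` {0..<j+2} \<subseteq> V" using cy_V xV unfolding d_def by auto
  have adj: "E (d k) (d l) \<longleftrightarrow> cycle_pat (j+2) k l" if k: "k < j+2" and l: "l < j+2" for k l
  proof (cases "k \<le> j"; cases "l \<le> j")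
    assume kj: "k \<le> j" and lj: "l \<le> j"
    have "E (d k) (d l) \<longleftrightarrow> \<bar>(a + int k) - (a + int l)\<bar> = 1"
      unfolding d_def using kj lj jm by (simp add: cyc_adj_small)
    also have "\<dots> \<longleftrightarrow> cycle_pat (j+2) k l" unfolding cycle_pat_def using kj lj by auto
    finally show ?thesis .
  next
    assume kj: "k \<le> j" and lj: "\<not> l \<le> j"
    then have l1: "l = j + 1" using l by auto
    have "E (d k) (d l) \<longleftrightarrow> E x (cy (a + int k))" unfolding d_def using kj lj Esym by auto
    also have "\<dots> \<longleftrightarrow> k = 0 \<or> k = j" using adjxx kj by blast
    also have "\<dots> \<longleftrightarrow> cycle_pat (j+2) k l" unfolding cycle_pat_def l1 using kj by auto
    finally show ?thesis .
  next
    assume kj: "\<not> k \<le> j" and lj: "l \<le> j"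
    then have k1: "k = j + 1" using k by auto
    have "E (d k) (d l) \<longleftrightarrow> E x (cy (a + int l))" unfolding d_def using kj lj by auto
    also have "\<dots> \<longleftrightarrow> l = 0 \<or> l = j" using adjxx lj by blast
    also have "\<dots> \<longleftrightarrow> cycle_pat (j+2) k l" unfolding cycle_pat_def k1 using lj by auto
    finally show ?thesis .
  next
    assume kj: "\<not> k \<le> j" and lj: "\<not> l \<le> j"
    then have "k = j + 1" "l = j + 1" using k l by auto
    then show ?thesis unfolding d_def cycle_pat_def using Eirr by auto
  qed
  have "is_hole_seq V E (j+2) d" unfolding is_hole_seq_def using j3 inj img adj by auto
  then show ?thesis using shortest by blast
qed


lemma adj_next: "E (cy p) (cy (p + 1))"
  using m10 by (subst cyc_adj_small) auto

lemma cy_wrap: "cy (a + int k) = cy (a + int k - int m)"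
  unfolding cyc_eq_dvd by simp

lemma nnf:
  assumes xV: "x \<in> V" and xC: "x \<notin> CC" and e0: "E x (cy a)" and et: "E x (cy (a + int t))"
    and t1: "1 \<le> t" and tm: "t < m"
  shows "E x (cy (a + 2)) \<or> (\<forall>k. 0 < k \<longrightarrow> k < m - 2 \<longrightarrow> \<not> E x (cy (a + int k)))"
proof -
  define P where "P k \<longleftrightarrow> 0 < k \<and> E x (cy (a + int k))" for k
  have Pt: "P t" unfolding P_def using t1 et by auto
  define k0 where "k0 = (LEAST k. P k)"
  have Pk0: "P k0" unfolding k0_def using Pt by (rule LeastI)
  have k0t: "k0 \<le> t" unfolding k0_def using Pt by (rule Least_le)
  have minl: "\<And>k. k < k0 \<Longrightarrow> \<not> P k" unfolding k0_def using not_less_Least by blast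
  have k00: "0 < k0" and ek0: "E x (cy (a + int k0))" using Pk0 unfolding P_def by auto
  have k01: "k0 \<noteq> 1"
  proof
    assume "k0 = 1"
    then have "E x (cy (a + 1))" using ek0 by simp
    then show False using tri[OF e0 adj_next] by blast
  qed
  show ?thesis
  proof (cases "k0 = 2")
    case True then show ?thesis using ek0 by simp
  next
    case False
    then have k03: "3 \<le> k0" using k00 k01 by auto
    have k0m1: "k0 \<noteq> m - 1"
    proof
      assume h: "k0 = m - 1"
      have "cy (a + int k0) = cy (a - 1)" unfolding cyc_eq_dvd using h m10 by (simp add: of_nat_diff)
      then have "E x (cy (a - 1))" using ek0 by simp
      moreover have "E (cy (a - 1)) (cy a)" using adj_next[of "a - 1"] by simp
      ultimately show False using tri e0 Esym by blast
    qed
    then have "k0 + 2 \<le> m" using k0t tm by auto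
    from gap[OF xV xC e0 ek0 k03 this] have "m \<le> k0 + 2" using minl unfolding P_def by blast
    then have "k0 = m - 2" using \<open>k0 + 2 \<le> m\<close> by auto
    then show ?thesis using minl unfolding P_def by auto
  qed
qed

lemma nnb:
  assumes xV: "x \<in> V" and xC: "x \<notin> CC" and e0: "E x (cy a)" and et: "E x (cy (a - int t))"
    and t1: "1 \<le> t" and tm: "t < m"
  shows "E x (cy (a - 2)) \<or> (\<forall>k. 0 < k \<longrightarrow> k < m - 2 \<longrightarrow> \<not> E x (cy (a - int k)))"
proof -
  define P where "P k \<longleftrightarrow> 0 < k \<and> E x (cy (a - int k))" for k
  have Pt: "P t" unfolding P_def using t1 et by auto
  define k0 where "k0 = (LEAST k. P k)"
  have Pk0: "P k0" unfolding k0_def using Pt by (rule LeastI)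
  have k0t: "k0 \<le> t" unfolding k0_def using Pt by (rule Least_le)
  have minl: "\<And>k. k < k0 \<Longrightarrow> \<not> P k" unfolding k0_def using not_less_Least by blast
  have k00: "0 < k0" and ek0: "E x (cy (a - int k0))" using Pk0 unfolding P_def by auto
  have k01: "k0 \<noteq> 1"
  proof
    assume "k0 = 1"
    then have "E x (cy (a - 1))" using ek0 by simp
    moreover have "E (cy (a - 1)) (cy a)" using adj_next[of "a - 1"] by simp
    ultimately show False using tri e0 Esym by blast
  qed
  show ?thesis
  proof (cases "k0 = 2")
    case True then show ?thesis using ek0 by simp
  next
    case False
    then have k03: "3 \<le> k0" using k00 k01 by auto
    have k0m1: "k0 \<noteq> m - 1"
    proof
      assume h: "k0 = m - 1"
      have "cy (a - int k0) = cy (a + 1)" unfolding cyc_eq_dvd using h m10 by (simp add: of_nat_diff)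
      then have "E x (cy (a + 1))" using ek0 by simp
      then show False using tri[OF e0 adj_next] by blast
    qed
    then have k0m: "k0 + 2 \<le> m" using k0t tm by auto
    have e1: "E x (cy (a - int k0 + int k0))" using e0 by simp
    have none: "\<forall>k. 0 < k \<longrightarrow> k < k0 \<longrightarrow> \<not> E x (cy (a - int k0 + int k))"
    proof (intro allI impI)
      fix k assume "0 < k" "k < k0"
      then have "\<not> P (k0 - k)" using minl by auto
      moreover have "a - int k0 + int k = a - int (k0 - k)" using \<open>k < k0\<close> by (simp add: of_nat_diff)
      ultimately show "\<not> E x (cy (a - int k0 + int k))" unfolding P_def using \<open>k < k0\<close> by (metis zero_less_diff)
    qed
    from gap[OF xV xC ek0 e1 k03 k0m none] have "m \<le> k0 + 2" .
    then have "k0 = m - 2" using k0m by auto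
    then show ?thesis using minl unfolding P_def by auto
  qed
qed


lemma cy_off: "\<exists>k<m. cy b = cy (a + int k)"
proof -
  have "nat ((b - a) mod int m) < m" by (rule cy_idx)
  moreover have "cy b = cy (a + int (nat ((b - a) mod int m)))"
  proof -
    have "int (nat ((b - a) mod int m)) = (b - a) mod int m" using mpos by simp
    then show ?thesis unfolding cyc_eq by (simp add: mod_add_right_eq)
  qed
  ultimately show ?thesis by blast
qed

lemma cy_offb: "\<exists>k<m. cy b = cy (a - int k)"
proof -
  have "nat ((a - b) mod int m) < m" by (rule cy_idx)
  moreover have "cy b = cy (a - int (nat ((a - b) mod int m)))"
  proof -
    have "int (nat ((a - b) mod int m)) = (a - b) mod int m" using mpos by simp
    then show ?thesis unfolding cyc_eq by (simp add: mod_diff_right_eq)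
  qed
  ultimately show ?thesis by blast
qed

lemma small_facts: "int m \<ge> 10" using m10 by simp

lemma Fno_char:
  assumes e0: "E x (cy a)" and fno: "\<forall>k. 0 < k \<longrightarrow> k < m - 2 \<longrightarrow> \<not> E x (cy (a + int k))"
    and eb: "E x (cy b)"
  shows "cy b = cy (a - 2) \<or> cy b = cy a"
proof -
  obtain k where k: "k < m" "cy b = cy (a + int k)" using cy_off by blast
  consider "k = 0" | "0 < k \<and> k < m - 2" | "k = m - 2" | "k = m - 1" using k(1) by linarith
  then show ?thesis
  proof cases
    case 1 then show ?thesis using k by simp
  next
    case 2 then show ?thesis using fno eb k by auto
  next
    case 3 then have "cy (a + int k) = cy (a - 2)" using m10 unfolding cyc_eq_dvd by (simp add: of_nat_diff)
    then have "cy b = cy (a - 2)" using k by simp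
    then show ?thesis by simp
  next
    case 4 then have "cy (a + int k) = cy (a - 1)" using m10 unfolding cyc_eq_dvd by (simp add: of_nat_diff)
    then have "cy b = cy (a - 1)" using k by simp
    moreover have "E (cy (a - 1)) (cy a)" using adj_next[of "a - 1"] by simp
    ultimately show ?thesis using tri eb e0 Esym by metis
  qed
qed

lemma Bno_char:
  assumes e0: "E x (cy a)" and fno: "\<forall>k. 0 < k \<longrightarrow> k < m - 2 \<longrightarrow> \<not> E x (cy (a - int k))"
    and eb: "E x (cy b)"
  shows "cy b = cy (a + 2) \<or> cy b = cy a"
proof -
  obtain k where k: "k < m" "cy b = cy (a - int k)" using cy_offb by blast
  consider "k = 0" | "0 < k \<and> k < m - 2" | "k = m - 2" | "k = m - 1" using k(1) by linarith
  then show ?thesis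
  proof cases
    case 1 then show ?thesis using k by simp
  next
    case 2 then show ?thesis using fno eb k by auto
  next
    case 3 then have "cy (a - int k) = cy (a + 2)" using m10 unfolding cyc_eq_dvd by (simp add: of_nat_diff)
    then have "cy b = cy (a + 2)" using k by simp
    then show ?thesis by simp
  next
    case 4 then have "cy (a - int k) = cy (a + 1)" using m10 unfolding cyc_eq_dvd by (simp add: of_nat_diff)
    then have "cy b = cy (a + 1)" using k by simp
    then show ?thesis using tri[OF e0 adj_next] eb by metis
  qed
qed

end


context hctx begin
lemma T2_at:
  assumes xV: "x \<in> V" and e1: "E x (cy (a - 4))" and e2: "E x (cy a)" and e3: "E x (cy (a + 4))"
  shows False
proof -
  have n1: "\<not> E x (cy (a - 3))" using tri[OF e1 adj_next[of "a - 4"]] by (auto simp: algebra_simps)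
  have n2: "\<not> E x (cy (a + 1))" using tri[OF e2 adj_next[of a]] by blast
  have a34: "E (cy (a+3)) (cy (a+4))" using adj_next[of "a+3"] by (simp add: algebra_simps)
  have n3: "\<not> E x (cy (a + 3))" using tri[of x "cy (a+4)" "cy (a+3)"] e3 a34 Esym by blast
  have m: "int m \<ge> 10" by (rule small_facts)
  show False
    apply (rule no_T2[of "[x, cy (a - 4), cy a, cy (a + 4), cy (a - 3), cy (a + 1), cy (a + 3)]"])
    using xV cy_V apply simp
     apply simp
    using e1 e2 e3 n1 n2 n3 m by (simp add: all7 T2_pat_def edges_of_def cyc_adj_small)
qed

lemma CL:
  assumes xV: "x \<in> V" and xC: "x \<notin> CC" and e0: "E x (cy a)"
  shows "Bt x a \<or> At x (a + 1) \<or> At x (a - 1)"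
proof (cases "\<forall>b. E x (cy b) \<longrightarrow> cy b = cy a")
  case True
  then have "Bt x a" unfolding Bt_def using e0 by metis
  then show ?thesis by blast
next
  case False
  then obtain b where eb: "E x (cy b)" and nb: "cy b \<noteq> cy a" by blast
  obtain t where t: "t < m" "cy b = cy (a + int t)" using cy_off by blast
  have t0: "t \<noteq> 0" using t nb by (metis add.right_neutral of_nat_0)
  have et: "E x (cy (a + int t))" using eb t by simp
  have "cy (a + int t) = cy (a - int (m - t))" unfolding cyc_eq_dvd using t(1) by (simp add: of_nat_diff)
  then have et': "E x (cy (a - int (m - t)))" using et by simp
  have m10': "int m \<ge> 10" by (rule small_facts)
  from nnf[OF xV xC e0 et] t0 t(1)
  have F: "E x (cy (a + 2)) \<or> (\<forall>k. 0 < k \<longrightarrow> k < m - 2 \<longrightarrow> \<not> E x (cy (a + int k)))" by auto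
  from nnb[OF xV xC e0 et'] t0 t(1)
  have B: "E x (cy (a - 2)) \<or> (\<forall>k. 0 < k \<longrightarrow> k < m - 2 \<longrightarrow> \<not> E x (cy (a - int k)))" by auto
  show ?thesis
  proof (cases "\<forall>k. 0 < k \<longrightarrow> k < m - 2 \<longrightarrow> \<not> E x (cy (a + int k))")
    case True
    note ch = Fno_char[OF e0 True]
    from ch[OF eb] nb have "cy b = cy (a - 2)" by blast
    then have e2: "E x (cy (a - 2))" using eb by simp
    have "At x (a - 1)" unfolding At_def using ch e0 e2 by (auto simp: algebra_simps)
    then show ?thesis by blast
  next
    case Fy: False
    show ?thesis
    proof (cases "\<forall>k. 0 < k \<longrightarrow> k < m - 2 \<longrightarrow> \<not> E x (cy (a - int k))")
      case True
      note ch = Bno_char[OF e0 True]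
      from ch[OF eb] nb have "cy b = cy (a + 2)" by blast
      then have e2: "E x (cy (a + 2))" using eb by simp
      have "At x (a + 1)" unfolding At_def using ch e0 e2 by (auto simp: algebra_simps)
      then show ?thesis by blast
    next
      case By: False
      have p2: "E x (cy (a + 2))" using F Fy by blast
      have m2: "E x (cy (a - 2))" using B By by blast
      have "cy (a - 2) = cy (a + 2 + int (m - 4))" unfolding cyc_eq_dvd using m10 by (simp add: of_nat_diff)
      then have e4: "E x (cy (a + 2 + int (m - 4)))" using m2 by simp
      have m4: "1 \<le> m - 4" "m - 4 < m" "0 < m - 4" "m - 4 < m - 2" using m10 by auto
      have "E x (cy (a + 2 + 2))" using nnf[OF xV xC p2 e4 m4(1,2)] m4(3,4) e4 by blast
      then have p4: "E x (cy (a + 4))" by (simp add: algebra_simps)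
      have "cy (a + 2) = cy (a - 2 - int (m - 4))" unfolding cyc_eq_dvd using m10 by (simp add: of_nat_diff)
      then have e4': "E x (cy (a - 2 - int (m - 4)))" using p2 by simp
      have "E x (cy (a - 2 - 2))" using nnb[OF xV xC m2 e4' m4(1,2)] m4(3,4) e4' by blast
      then have m4': "E x (cy (a - 4))" by (simp add: algebra_simps)
      show ?thesis using T2_at[OF xV m4' e0 p4] by blast
    qed
  qed
qed

lemma L3:
  assumes xV: "x \<in> V" and xC: "x \<notin> CC" and e0: "E x (cy a)" and e2: "E x (cy (a + 2))"
    and e4: "E x (cy (a + 4))"
  shows False
proof -
  have m: "int m \<ge> 10" by (rule small_facts)
  have d1: "cy a \<noteq> cy (a + 2)" "cy (a + 4) \<noteq> cy (a + 2)" "cy a \<noteq> cy (a + 4)"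
    using m by (simp_all add: cyc_eq_small)
  from CL[OF xV xC e2] show False
    unfolding At_def Bt_def using e0 e4 d1 by (auto simp: algebra_simps)
qed


lemma At_same: "At u i \<Longrightarrow> E u (cy b) = E (cy i) (cy b)"
  using At_cy[of i] unfolding At_def by blast

lemma swap_cy: "cyc m (c(nat (i mod int m) := u)) p = (if p mod int m = i mod int m then u else cy p)"
  unfolding cyc_def using mpos by (auto simp: nat_eq_iff)

lemma swap_hctx:
  assumes uV: "u \<in> V" and uC: "u \<notin> CC" and au: "At u i"
  shows "hctx V E m (c(nat (i mod int m) := u))"
proof -
  define i0 where "i0 = nat (i mod int m)"
  define c' where "c' = c(i0 := u)"
  have i0: "i0 < m" unfolding i0_def by (rule cy_idx)
  have ci0: "c i0 = cy i" unfolding i0_def cy_def' by simp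
  have hl: "m \<ge> 5" "inj_on c {0..<m}" "c ` {0..<m} \<subseteq> V"
    "\<forall>p<m. \<forall>q<m. E (c p) (c q) \<longleftrightarrow> cycle_pat m p q" using hole unfolding is_hole_seq_def by auto
  have inj: "inj_on c' {0..<m}"
  proof (rule inj_onI)
    fix p q assume p: "p \<in> {0..<m}" and q: "q \<in> {0..<m}" and eq: "c' p = c' q"
    show "p = q"
    proof (cases "p = i0"; cases "q = i0")
      assume "p = i0" "q = i0" then show ?thesis by simp
    next
      assume "p = i0" "q \<noteq> i0" then have "u = c q" using eq unfolding c'_def by simp
      then show ?thesis using uC q by auto
    next
      assume "p \<noteq> i0" "q = i0" then have "u = c p" using eq unfolding c'_def by simp
      then show ?thesis using uC p by auto
    next
      assume "p \<noteq> i0" "q \<noteq> i0" then have "c p = c q" using eq unfolding c'_def by simp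
      then show ?thesis using hl(2) p q by (auto dest: inj_onD)
    qed
  qed
  have img: "c' ` {0..<m} \<subseteq> V" using hl(3) uV unfolding c'_def by auto
  have eqE: "E (c' p) (c' q) = E (c p) (c q)" if p: "p < m" and q: "q < m" for p q
  proof (cases "p = i0"; cases "q = i0")
    assume "p = i0" "q = i0" then show ?thesis unfolding c'_def using Eirr by simp
  next
    assume a: "p = i0" "q \<noteq> i0"
    have "E u (c q) = E (c i0) (c q)" using At_same[OF au, of "int q"] c_cy[OF q] ci0 by simp
    then show ?thesis using a unfolding c'_def by simp
  next
    assume a: "p \<noteq> i0" "q = i0"
    have "E u (c p) = E (c i0) (c p)" using At_same[OF au, of "int p"] c_cy[OF p] ci0 by simp
    then show ?thesis using a Esym unfolding c'_def by (auto)
  next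
    assume "p \<noteq> i0" "q \<noteq> i0" then show ?thesis unfolding c'_def by simp
  qed
  have "is_hole_seq V E m c'" unfolding is_hole_seq_def using hl(1,4) inj img eqE by auto
  then have "shortest_hole_seq V E m c'" unfolding shortest_hole_seq_def using shortest by blast
  then show ?thesis unfolding c'_def i0_def using sg abp by unfold_locales auto
qed

lemma swap_L3:
  assumes uV: "u \<in> V" and uC: "u \<notin> CC" and au: "At u i" and xV: "x \<in> V" and xC: "x \<notin> CC"
    and xu: "x \<noteq> u" and e0: "E x u" and e2: "E x (cy (i + 2))" and e4: "E x (cy (i + 4))"
  shows False
proof -
  interpret h: hctx V E m "c(nat (i mod int m) := u)" by (rule swap_hctx[OF uV uC au])
  have m: "int m \<ge> 10" by (rule small_facts)
  have n2: "(i + 2) mod int m \<noteq> i mod int m" and n4: "(i + 4) mod int m \<noteq> i mod int m"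
    using m cyc_eq[symmetric] by (simp_all add: cyc_eq_small)
  have "x \<notin> (c(nat (i mod int m) := u)) ` {0..<m}" using xC xu by auto
  moreover have "E x (cyc m (c(nat (i mod int m) := u)) i)" using e0 unfolding swap_cy by simp
  moreover have "E x (cyc m (c(nat (i mod int m) := u)) (i + 2))" using e2 n2 unfolding swap_cy by simp
  moreover have "E x (cyc m (c(nat (i mod int m) := u)) (i + 4))" using e4 n4 unfolding swap_cy by simp
  ultimately show False using h.L3[OF xV] by blast
qed

lemma swap_L3':
  assumes uV: "u \<in> V" and uC: "u \<notin> CC" and au: "At u i" and xV: "x \<in> V" and xC: "x \<notin> CC"
    and xu: "x \<noteq> u" and e0: "E x u" and e2: "E x (cy (i - 2))" and e4: "E x (cy (i - 4))"
  shows False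
proof -
  interpret h: hctx V E m "c(nat (i mod int m) := u)" by (rule swap_hctx[OF uV uC au])
  have m: "int m \<ge> 10" by (rule small_facts)
  have n2: "(i - 2) mod int m \<noteq> i mod int m" and n4: "(i - 4) mod int m \<noteq> i mod int m"
    using m cyc_eq[symmetric] by (simp_all add: cyc_eq_small)
  have "x \<notin> (c(nat (i mod int m) := u)) ` {0..<m}" using xC xu by auto
  moreover have "E x (cyc m (c(nat (i mod int m) := u)) (i - 4 + 4))" using e0 unfolding swap_cy by simp
  moreover have "E x (cyc m (c(nat (i mod int m) := u)) (i - 4 + 2))" using e2 n2 unfolding swap_cy by simp
  moreover have "E x (cyc m (c(nat (i mod int m) := u)) (i - 4))" using e4 n4 unfolding swap_cy by simp
  ultimately show False using h.L3[OF xV] by blast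
qed


lemma cy_shift: "cy p = cy q \<Longrightarrow> cy (p + r) = cy (q + r)"
  unfolding cyc_eq_dvd by simp
lemma Bt_notC: "Bt (cy k) i \<Longrightarrow> False"
proof -
  assume b: "Bt (cy k) i"
  have m: "int m \<ge> 10" by (rule small_facts)
  have "E (cy k) (cy (k + 1))" "E (cy k) (cy (k - 1))" using adj_next[of k] Esym[OF adj_next[of "k - 1"]] by simp_all
  then have "cy (k + 1) = cy (k - 1)" using b unfolding Bt_def by metis
  then show False using m by (simp add: cyc_eq_small)
qed

lemma At_unique_C: "At (cy k) i \<Longrightarrow> cy k = cy i"
proof -
  assume b: "At (cy k) i"
  have m: "int m \<ge> 10" by (rule small_facts)
  have e: "E (cy k) (cy (k + 1))" "E (cy k) (cy (k - 1))" using adj_next[of k] Esym[OF adj_next[of "k - 1"]] by simp_all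
  have d1: "cy (k + 1) = cy (i - 1) \<or> cy (k + 1) = cy (i + 1)" using b e unfolding At_def by blast
  have d2: "cy (k - 1) = cy (i - 1) \<or> cy (k - 1) = cy (i + 1)" using b e unfolding At_def by blast
  show ?thesis
  proof (cases "cy (k + 1) = cy (i + 1)")
    case True then show ?thesis using cy_shift[OF True, of "-1"] by simp
  next
    case False
    then have h1: "cy (k + 1) = cy (i - 1)" using d1 by blast
    show ?thesis
    proof (cases "cy (k - 1) = cy (i - 1)")
      case True then show ?thesis using cy_shift[OF True, of "1"] by simp
    next
      case False
      then have h2: "cy (k - 1) = cy (i + 1)" using d2 by blast
      have "cy (k + 1 + 2) = cy (i + 1)" using cy_shift[OF h1, of 2] by (simp add: algebra_simps)
      then have "cy (k + 3) = cy (k - 1)" using h2 by (simp add: algebra_simps)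
      then show ?thesis using m by (simp add: cyc_eq_small)
    qed
  qed
qed

lemma indepA: "independent_set E (A_set V E m c a)"
  unfolding independent_set_def
proof (intro ballI notI)
  fix x y assume x: "x \<in> A_set V E m c a" and y: "y \<in> A_set V E m c a" and e: "E x y"
  have "E x (cy (a - 1))" "E y (cy (a - 1))" using x y unfolding A_iff At_def by auto
  then show False using tri[OF e] by blast
qed

lemma indepB: "independent_set E (B_set V E m c a)"
  unfolding independent_set_def
proof (intro ballI notI)
  fix x y assume x: "x \<in> B_set V E m c a" and y: "y \<in> B_set V E m c a" and e: "E x y"
  have "E x (cy a)" "E y (cy a)" using x y unfolding B_iff Bt_def by auto
  then show False using tri[OF e] by blast
qed

lemma AB_adj:
  assumes u: "u \<in> A_set V E m c a" and w: "w \<in> B_set V E m c a"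
  shows "E u w"
proof -
  have uV: "u \<in> V" and au: "At u a" using u A_iff by auto
  have wV: "w \<in> V" and bw: "Bt w a" using w B_iff by auto
  have m: "int m \<ge> 10" by (rule small_facts)
  show ?thesis
  proof (cases "u \<in> CC")
    case True
    then obtain k where k: "u = cy k" using C_cy by blast
    then have "At (cy k) a" using au by simp
    then have "u = cy a" using At_unique_C k by simp
    moreover have "E w (cy a)" using bw unfolding Bt_def by blast
    ultimately show ?thesis using Esym by blast
  next
    case False
    have wC: "w \<notin> CC"
    proof
      assume "w \<in> CC"
      then obtain k where "w = cy k" using C_cy by blast
      then show False using bw Bt_notC by simp
    qed
    show ?thesis
    proof (rule ccontr)
      assume nuw: "\<not> E u w"
      have Eu: "\<And>p. E (cy p) u = E u (cy p)" and Ew: "\<And>p. E (cy p) w = E w (cy p)" by (metis Esym)+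
      have Au: "\<And>b. E u (cy b) = (cy b = cy (a - 1) \<or> cy b = cy (a + 1))" using au unfolding At_def by blast
      have Bw: "\<And>b. E w (cy b) = (cy b = cy a)" using bw unfolding Bt_def by blast
      show False
        apply (rule no_X2[of "[cy (a - 1), cy a, cy (a + 1), u, cy (a - 2), w, cy (a + 2)]"])
        using uV wV cy_V apply simp
         apply simp
        using nuw m by (simp add: all7 X2_pat_def edges_of_def cyc_adj_small Eu Ew Au Bw cyc_eq_small)
    qed
  qed
qed


lemma A_nbr:
  assumes u: "u \<in> A_set V E m c a" and xV: "x \<in> V" and eux: "E u x"
  shows "x \<in> B_set V E m c (a - 2) \<union> A_set V E m c (a - 1) \<union> B_set V E m c a
           \<union> A_set V E m c (a + 1) \<union> B_set V E m c (a + 2)"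
proof -
  have uV: "u \<in> V" and au: "At u a" using u A_iff by auto
  have m: "int m \<ge> 10" by (rule small_facts)
  have Au: "\<And>b. E u (cy b) = (cy b = cy (a - 1) \<or> cy b = cy (a + 1))" using au unfolding At_def by blast
  show ?thesis
  proof (cases "x \<in> CC")
    case True
    then obtain b where xb: "x = cy b" using C_cy by blast
    have "E u (cy b)" using eux xb by simp
    show ?thesis
    proof (cases "u \<in> CC")
      case True
      then obtain k where k: "u = cy k" using C_cy by blast
      then have "At (cy k) a" using au by simp
      then have "u = cy a" using At_unique_C k by simp
      then have "E (cy a) (cy b)" using eux xb by simp
      then have "cy b = cy (a - 1) \<or> cy b = cy (a + 1)" using At_cy[of a] unfolding At_def by blast
      then have "At x (a - 1) \<or> At x (a + 1)" using xb At_cy[of "a - 1"] At_cy[of "a + 1"] by auto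
      then show ?thesis using xV A_iff by blast
    next
      case False
      have "cy b = cy (a - 1) \<or> cy b = cy (a + 1)" using Au \<open>E u (cy b)\<close> by blast
      then have "At x (a - 1) \<or> At x (a + 1)" using xb At_cy[of "a - 1"] At_cy[of "a + 1"] by auto
      then show ?thesis using xV A_iff by blast
    qed
  next
    case xC: False
    show ?thesis
    proof (cases "u \<in> CC")
      case True
      then obtain k where k: "u = cy k" using C_cy by blast
      then have "At (cy k) a" using au by simp
      then have "u = cy a" using At_unique_C k by simp
      then have "E x (cy a)" using eux Esym by simp
      from CL[OF xV xC this] show ?thesis using xV A_iff B_iff by blast
    next
      case uC: False
      have exu: "E x u" using eux Esym by blast
      have xu: "x \<noteq> u" using eux Eirr by blast
      have n1: "\<not> E x (cy (a - 1))" using tri[OF exu] Au by blast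
      have n2: "\<not> E x (cy (a + 1))" using tri[OF exu] Au by blast
      show ?thesis
      proof (cases "E x (cy a)")
        case True
        from CL[OF xV xC this] show ?thesis using xV A_iff B_iff by blast
      next
        case n0: False
        show ?thesis
        proof (cases "E x (cy (a + 2))")
          case True
          from CL[OF xV xC this] have "Bt x (a + 2) \<or> At x (a + 3) \<or> At x (a + 1)" by (simp add: algebra_simps)
          moreover have "\<not> At x (a + 3)"
          proof
            assume "At x (a + 3)"
            then have "E x (cy (a + 4))" unfolding At_def by (simp add: algebra_simps)
            then show False using swap_L3[OF uV uC au xV xC xu exu True] by blast
          qed
          ultimately show ?thesis using xV A_iff B_iff by blast
        next
          case n3: False
          show ?thesis
          proof (cases "E x (cy (a - 2))")
            case True
            from CL[OF xV xC this] have "Bt x (a - 2) \<or> At x (a - 1) \<or> At x (a - 3)" by (simp add: algebra_simps)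
            moreover have "\<not> At x (a - 3)"
            proof
              assume "At x (a - 3)"
              then have "E x (cy (a - 4))" unfolding At_def by (simp add: algebra_simps)
              then show False using swap_L3'[OF uV uC au xV xC xu exu True] by blast
            qed
            ultimately show ?thesis using xV A_iff B_iff by blast
          next
            case n4: False
            have Eu: "\<And>p. E (cy p) u = E u (cy p)" by (metis Esym)
            have Ex: "\<And>p. E (cy p) x = E x (cy p)" by (metis Esym)
            show ?thesis
            proof (rule FalseE)
              show False
                apply (rule no_X2[of "[cy (a + 1), u, cy (a - 1), cy a, cy (a + 2), x, cy (a - 2)]"])
                using uV xV cy_V apply simp
                 apply simp
                using eux n0 n1 n2 n3 n4 m by (simp add: all7 X2_pat_def edges_of_def cyc_adj_small Eu Ex Au cyc_eq_small)
            qed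
          qed
        qed
      qed
    qed
  qed
qed

lemma B_nbr:
  assumes w: "w \<in> B_set V E m c a" and xV: "x \<in> V" and ewx: "E w x"
  shows "x \<in> A_set V E m c (a - 2) \<union> B_set V E m c (a - 1) \<union> A_set V E m c a
           \<union> B_set V E m c (a + 1) \<union> A_set V E m c (a + 2)"
proof -
  have wV: "w \<in> V" and bw: "Bt w a" using w B_iff by auto
  have m: "int m \<ge> 10" by (rule small_facts)
  have Bw: "\<And>b. E w (cy b) = (cy b = cy a)" using bw unfolding Bt_def by blast
  have wC: "w \<notin> CC"
  proof
    assume "w \<in> CC"
    then obtain k where "w = cy k" using C_cy by blast
    then show False using bw Bt_notC by simp
  qed
  show ?thesis
  proof (cases "x \<in> CC")
    case True
    then obtain b where xb: "x = cy b" using C_cy by blast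
    have "cy b = cy a" using ewx xb Bw by simp
    then have "At x a" using xb At_cy[of a] by simp
    then show ?thesis using xV A_iff by blast
  next
    case xC: False
    have exw: "E x w" using ewx Esym by blast
    have n0: "\<not> E x (cy a)" using tri[OF exw] Bw by blast
    show ?thesis
    proof (cases "E x (cy (a + 1))")
      case True
      from CL[OF xV xC this] have "Bt x (a + 1) \<or> At x (a + 2) \<or> At x a" by (simp add: algebra_simps)
      then show ?thesis using xV A_iff B_iff by blast
    next
      case n1: False
      show ?thesis
      proof (cases "E x (cy (a - 1))")
        case True
        from CL[OF xV xC this] have "Bt x (a - 1) \<or> At x a \<or> At x (a - 2)" by (simp add: algebra_simps)
        then show ?thesis using xV A_iff B_iff by blast
      next
        case n2: False
        have Ew: "\<And>p. E (cy p) w = E w (cy p)" by (metis Esym)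
        have Ex: "\<And>p. E (cy p) x = E x (cy p)" by (metis Esym)
        show ?thesis
        proof (cases "E x (cy (a + 2))")
          case True
          show ?thesis
          proof (rule FalseE)
            show False
              apply (rule no_C5[of "[cy a, cy (a + 1), cy (a + 2), x, w]"])
              using wV xV cy_V apply simp
               apply simp
              using True ewx exw n0 n1 m by (simp add: all5 cycle_pat_def cyc_adj_small Ew Ex Bw cyc_eq_small)
          qed
        next
          case n3: False
          show ?thesis
          proof (cases "E x (cy (a - 2))")
            case True
            show ?thesis
            proof (rule FalseE)
              show False
                apply (rule no_C5[of "[cy a, cy (a - 1), cy (a - 2), x, w]"])
                using wV xV cy_V apply simp
                 apply simp
                using True ewx exw n0 n2 m by (simp add: all5 cycle_pat_def cyc_adj_small Ew Ex Bw cyc_eq_small)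
            qed
          next
            case n4: False
            show ?thesis
            proof (rule FalseE)
              show False
                apply (rule no_T2[of "[cy a, cy (a - 1), cy (a + 1), w, cy (a - 2), cy (a + 2), x]"])
                using wV xV cy_V apply simp
                 apply simp
                using ewx exw n0 n1 n2 n3 n4 m by (simp add: all7 T2_pat_def edges_of_def cyc_adj_small Ew Ex Bw cyc_eq_small)
            qed
          qed
        qed
      qed
    qed
  qed
qed

end


theorem proposition3p5:
  fixes V :: "'a set" and E :: "'a \<Rightarrow> 'a \<Rightarrow> bool" and m :: nat and c :: "nat \<Rightarrow> 'a"
  assumes "simple_graph V E" and "connected_graph V E" and "almost_bip_perm V E"
    and "has_hole V E"
    and "shortest_hole_seq V E m c"
  defines "A \<equiv> A_set V E m c" and "B \<equiv> B_set V E m c" and "N \<equiv> nbhd V E"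
  shows "\<forall>i::nat < m.
     independent_set E (A (int i)) \<and> independent_set E (B (int i))
   \<and> (\<forall>u\<in>A (int i). \<forall>w\<in>B (int i). E u w)
   \<and> (\<forall>u\<in>A (int i). B (int i) \<subseteq> N u \<and>
        N u \<subseteq> B (int i - 2) \<union> A (int i - 1) \<union> B (int i) \<union> A (int i + 1) \<union> B (int i + 2))
   \<and> (\<forall>w\<in>B (int i). A (int i) \<subseteq> N w \<and>
        N w \<subseteq> A (int i - 2) \<union> B (int i - 1) \<union> A (int i) \<union> B (int i + 1) \<union> A (int i + 2))"
proof (intro allI impI)
  fix i :: nat assume "i < m"
  interpret h: hctx V E m c using assms(1,3,5) by unfold_locales
  define a where "a = int i"
  have i1: "independent_set E (A a)" unfolding A_def by (rule h.indepA)
  have i2: "independent_set E (B a)" unfolding B_def by (rule h.indepB)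
  have i3: "\<forall>u\<in>A a. \<forall>w\<in>B a. E u w" unfolding A_def B_def using h.AB_adj by blast
  have i4: "\<forall>u\<in>A a. B a \<subseteq> N u \<and>
        N u \<subseteq> B (a - 2) \<union> A (a - 1) \<union> B a \<union> A (a + 1) \<union> B (a + 2)"
  proof
    fix u assume u: "u \<in> A a"
    have "B a \<subseteq> N u"
    proof
      fix w assume w: "w \<in> B a"
      have "E u w" using i3 u w by blast
      moreover have "w \<in> V" using w unfolding B_def h.B_iff by blast
      ultimately show "w \<in> N u" unfolding N_def nbhd_def by blast
    qed
    moreover have "N u \<subseteq> B (a - 2) \<union> A (a - 1) \<union> B a \<union> A (a + 1) \<union> B (a + 2)"
    proof
      fix x assume "x \<in> N u"
      then have "x \<in> V" "E u x" unfolding N_def nbhd_def by auto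
      then show "x \<in> B (a - 2) \<union> A (a - 1) \<union> B a \<union> A (a + 1) \<union> B (a + 2)"
        using h.A_nbr u unfolding A_def B_def by blast
    qed
    ultimately show "B a \<subseteq> N u \<and> N u \<subseteq> B (a - 2) \<union> A (a - 1) \<union> B a \<union> A (a + 1) \<union> B (a + 2)" by blast
  qed
  have i5: "\<forall>w\<in>B a. A a \<subseteq> N w \<and>
        N w \<subseteq> A (a - 2) \<union> B (a - 1) \<union> A a \<union> B (a + 1) \<union> A (a + 2)"
  proof
    fix w assume w: "w \<in> B a"
    have "A a \<subseteq> N w"
    proof
      fix u assume u: "u \<in> A a"
      have "E u w" using i3 u w by blast
      then have "E w u" using h.Esym by blast
      moreover have "u \<in> V" using u unfolding A_def h.A_iff by blast
      ultimately show "u \<in> N w" unfolding N_def nbhd_def by blast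
    qed
    moreover have "N w \<subseteq> A (a - 2) \<union> B (a - 1) \<union> A a \<union> B (a + 1) \<union> A (a + 2)"
    proof
      fix x assume "x \<in> N w"
      then have "x \<in> V" "E w x" unfolding N_def nbhd_def by auto
      then show "x \<in> A (a - 2) \<union> B (a - 1) \<union> A a \<union> B (a + 1) \<union> A (a + 2)"
        using h.B_nbr w unfolding A_def B_def by blast
    qed
    ultimately show "A a \<subseteq> N w \<and> N w \<subseteq> A (a - 2) \<union> B (a - 1) \<union> A a \<union> B (a + 1) \<union> A (a + 2)" by blast
  qed
  show "independent_set E (A (int i)) \<and> independent_set E (B (int i))
   \<and> (\<forall>u\<in>A (int i). \<forall>w\<in>B (int i). E u w)
   \<and> (\<forall>u\<in>A (int i). B (int i) \<subseteq> N u \<and>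
        N u \<subseteq> B (int i - 2) \<union> A (int i - 1) \<union> B (int i) \<union> A (int i + 1) \<union> B (int i + 2))
   \<and> (\<forall>w\<in>B (int i). A (int i) \<subseteq> N w \<and>
        N w \<subseteq> A (int i - 2) \<union> B (int i - 1) \<union> A (int i) \<union> B (int i + 1) \<union> A (int i + 2))"
    using i1 i2 i3 i4 i5 unfolding a_def by blast
qed

end
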